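(* Let $C$ be a normal, closed cone with nonempty interior in a real Banach space. If $f:\operatorname{int} C\to\operatorname{int} C$ is $\tau$-condensing and $g:\operatorname{int} C\to\operatorname{int} C$ is $d_T$-nonexpansive, then $f+g$ is $\tau$-condensing.
   Context: A closed cone $C$ (closed convex, $\lambda C\subseteq C$ for $\lambda\ge0$, $C\cap(-C)=\{0\}$) induces the order $x\le y$ iff $y-x\in C$. $C$ is normal if there is $\kappa$ with $\|x\|\le\kappa\|y\|$ whenever $0\le x\le y$. Thompson's metric on $\operatorname{int}C$: $d_T(x,y)=\log\inf\{\beta\ge1:\beta^{-1}x\le y\le\beta x\}$; $g$ is $d_T$-nonexpansive if $d_T(g(x),g(y))\le d_T(x,y)$. For a $d_T$-bounded set $A\subseteq\operatorname{int}C$, $\tau(A)=\inf\{d>0: A$ has a finite cover by sets of $d_T$-diameter $\le d\}$. A continuous map $f:D\to\operatorname{int}C$ ($D\subseteq\operatorname{int}C$) is $\tau$-condensing if $\tau(f(A))<\tau(A)$ for every $d_T$-bounded $A\subseteq D$ with $\tau(A)>0$. *)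

theory Defs
  imports "HOL-Analysis.Analysis"
begin

definition cone_le :: "'a::real_vector set \<Rightarrow> 'a \<Rightarrow> 'a \<Rightarrow> bool" where
  "cone_le C x y \<longleftrightarrow> y - x \<in> C"

definition closed_proper_cone :: "'a::real_normed_vector set \<Rightarrow> bool" where
  "closed_proper_cone C \<longleftrightarrow> closed C \<and> convex C \<and> cone C \<and> C \<inter> uminus ` C = {0}"

definition normal_cone :: "'a::real_normed_vector set \<Rightarrow> bool" where
  "normal_cone C \<longleftrightarrow> (\<exists>\<kappa>. \<forall>x y. cone_le C 0 x \<and> cone_le C x y \<longrightarrow> norm x \<le> \<kappa> * norm y)"

definition thompson :: "'a::real_normed_vector set \<Rightarrow> 'a \<Rightarrow> 'a \<Rightarrow> real" where
  "thompson C x y = ln (Inf {\<beta>::real. \<beta> \<ge> 1 \<and> cone_le C (inverse \<beta> *\<^sub>R x) y \<and> cone_le C y (\<beta> *\<^sub>R x)})"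

definition thompson_bounded :: "'a::real_normed_vector set \<Rightarrow> 'a set \<Rightarrow> bool" where
  "thompson_bounded C A \<longleftrightarrow> A \<subseteq> interior C \<and> (\<exists>M. \<forall>x\<in>A. \<forall>y\<in>A. thompson C x y \<le> M)"

text \<open>Kuratowski measure of noncompactness w.r.t. Thompson's metric (value \<infinity> if no finite
  cover with bounded diameter exists).\<close>
definition tau :: "'a::real_normed_vector set \<Rightarrow> 'a set \<Rightarrow> ereal" where
  "tau C A = Inf {ereal d | d. d > 0 \<and> (\<exists>F. finite F \<and> A \<subseteq> \<Union>F \<and>
      (\<forall>S\<in>F. S \<subseteq> interior C \<and> (\<forall>x\<in>S. \<forall>y\<in>S. thompson C x y \<le> d)))}"

definition tau_condensing :: "'a::real_normed_vector set \<Rightarrow> 'a set \<Rightarrow> ('a \<Rightarrow> 'a) \<Rightarrow> bool" where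
  "tau_condensing C D f \<longleftrightarrow> continuous_on D f \<and> f ` D \<subseteq> interior C \<and>
     (\<forall>A. A \<subseteq> D \<and> thompson_bounded C A \<and> tau C A > 0 \<longrightarrow> tau C (f ` A) < tau C A)"

definition thompson_nonexpansive :: "'a::real_normed_vector set \<Rightarrow> ('a \<Rightarrow> 'a) \<Rightarrow> bool" where
  "thompson_nonexpansive C g \<longleftrightarrow> g ` interior C \<subseteq> interior C \<and>
     (\<forall>x\<in>interior C. \<forall>y\<in>interior C. thompson C (g x) (g y) \<le> thompson C x y)"

end

theory Submission
  imports Defs
begin

definition rel :: "'a::real_normed_vector set \<Rightarrow> real \<Rightarrow> 'a \<Rightarrow> 'a \<Rightarrow> bool" where
  "rel C \<beta> x y \<longleftrightarrow> cone_le C (inverse \<beta> *\<^sub>R x) y \<and> cone_le C y (\<beta> *\<^sub>R x)"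

lemma cone_add:
  assumes "closed_proper_cone C" "x \<in> C" "y \<in> C" shows "x + y \<in> C"
proof -
  have cv: "convex C" and cn: "cone C" using assms(1) unfolding closed_proper_cone_def by auto
  have "(1/2) *\<^sub>R x + (1/2) *\<^sub>R y \<in> C" using cv assms(2,3) unfolding convex_def by force
  then have "2 *\<^sub>R ((1/2) *\<^sub>R x + (1/2) *\<^sub>R y) \<in> C" using cn unfolding cone_def by force
  then show ?thesis by (simp add: scaleR_add_right)
qed

lemma cone_scale:
  assumes "closed_proper_cone C" "x \<in> C" "c \<ge> 0" shows "c *\<^sub>R x \<in> C"
  using assms unfolding closed_proper_cone_def cone_def by auto

lemma le_trans_c:
  assumes "closed_proper_cone C" "cone_le C x y" "cone_le C y z" shows "cone_le C x z"
proof -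
  have "(z - y) + (y - x) \<in> C" using cone_add assms unfolding cone_le_def by blast
  then show ?thesis unfolding cone_le_def by simp
qed

lemma le_add_c:
  assumes "closed_proper_cone C" "cone_le C x y" "cone_le C x' y'" shows "cone_le C (x+x') (y+y')"
proof -
  have "(y - x) + (y' - x') \<in> C" using cone_add assms unfolding cone_le_def by blast
  then show ?thesis unfolding cone_le_def by (simp add: algebra_simps)
qed

lemma le_scale_c:
  assumes "closed_proper_cone C" "cone_le C x y" "c \<ge> 0" shows "cone_le C (c *\<^sub>R x) (c *\<^sub>R y)"
  using cone_scale[OF assms(1) _ assms(3), of "y - x"] assms(2) unfolding cone_le_def
  by (simp add: scaleR_diff_right)

lemma le_scalar_c:
  assumes "closed_proper_cone C" "x \<in> C" "a \<le> b" shows "cone_le C (a *\<^sub>R x) (b *\<^sub>R x)"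
  using cone_scale[OF assms(1,2), of "b - a"] assms(3) unfolding cone_le_def
  by (simp add: scaleR_diff_left)

lemma int_sub: "interior C \<subseteq> C" by (rule interior_subset)

lemma int_dom:
  fixes x :: "'a::real_normed_vector"
  assumes "x \<in> interior C" shows "\<exists>c>0. x - c *\<^sub>R y \<in> C"
proof -
  obtain r where r: "r > 0" "ball x r \<subseteq> C" using assms by (meson mem_interior)
  define c where "c = r / (2 * (norm y + 1))"
  have c: "c > 0" using r unfolding c_def by (intro divide_pos_pos) (auto intro: add_nonneg_pos)
  have "norm (c *\<^sub>R y) = c * norm y" using c by simp
  also have "\<dots> < r"
  proof -
    have "norm y / (2 * (norm y + 1)) < 1" proof -
      have "norm y < 2 * (norm y + 1)" using norm_ge_zero[of y] by argo
      moreover have "0 < 2 * (norm y + 1)" using norm_ge_zero[of y] by argo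
      ultimately show ?thesis by (metis divide_less_eq_1_pos)
    qed
    then have "r * (norm y / (2 * (norm y + 1))) < r * 1" using r(1) by (intro mult_strict_left_mono) auto
    then show ?thesis unfolding c_def by simp
  qed
  finally have "x - c *\<^sub>R y \<in> ball x r" by (simp add: dist_norm)
  then show ?thesis using r c by blast
qed

lemma rel_exists:
  assumes C: "closed_proper_cone C" and x: "x \<in> interior C" and y: "y \<in> interior C"
  shows "\<exists>\<beta>\<ge>1. rel C \<beta> x y"
proof -
  obtain c1 where c1: "c1 > 0" "y - c1 *\<^sub>R x \<in> C" using int_dom[OF y] by blast
  obtain c2 where c2: "c2 > 0" "x - c2 *\<^sub>R y \<in> C" using int_dom[OF x] by blast
  define \<beta> where "\<beta> = max 1 (max (1/c1) (1/c2))"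
  have b: "\<beta> \<ge> 1" "\<beta> \<ge> 1/c1" "\<beta> \<ge> 1/c2" unfolding \<beta>_def by auto
  have xC: "x \<in> C" using x interior_subset by blast
  have i1: "inverse \<beta> \<le> c1" using le_imp_inverse_le[OF b(2)] c1(1) by simp
  have "cone_le C (inverse \<beta> *\<^sub>R x) (c1 *\<^sub>R x)" using le_scalar_c[OF C xC i1] .
  moreover have "cone_le C (c1 *\<^sub>R x) y" using c1 unfolding cone_le_def by simp
  ultimately have r1: "cone_le C (inverse \<beta> *\<^sub>R x) y" using le_trans_c[OF C] by blast
  have "\<beta> *\<^sub>R (x - (1/\<beta>) *\<^sub>R y) \<in> C"
  proof -
    have "1/\<beta> \<le> c2" using le_imp_inverse_le[OF b(3)] c2(1) by (simp add: inverse_eq_divide)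
    have yC: "y \<in> C" using y interior_subset by blast
    have "cone_le C ((1/\<beta>) *\<^sub>R y) (c2 *\<^sub>R y)" using le_scalar_c[OF C yC \<open>1/\<beta> \<le> c2\<close>] .
    moreover have "cone_le C (c2 *\<^sub>R y) x" using c2 unfolding cone_le_def by simp
    ultimately have "cone_le C ((1/\<beta>) *\<^sub>R y) x" using le_trans_c[OF C] by blast
    then show ?thesis using cone_scale[OF C, of _ \<beta>] b(1) unfolding cone_le_def by auto
  qed
  then have r2: "cone_le C y (\<beta> *\<^sub>R x)" using b(1) unfolding cone_le_def
    by (simp add: scaleR_diff_right)
  show ?thesis using r1 r2 b(1) unfolding rel_def by blast
qed

lemma thompson_le:
  assumes "\<beta> \<ge> 1" "rel C \<beta> x y" shows "thompson C x y \<le> ln \<beta>"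
proof -
  let ?S = "{\<beta>::real. \<beta> \<ge> 1 \<and> cone_le C (inverse \<beta> *\<^sub>R x) y \<and> cone_le C y (\<beta> *\<^sub>R x)}"
  have m: "\<beta> \<in> ?S" using assms unfolding rel_def by auto
  have bdd: "bdd_below ?S" by (rule bdd_belowI[of _ 1]) auto
  have "Inf ?S \<le> \<beta>" by (rule cInf_lower[OF m bdd])
  moreover have "Inf ?S \<ge> 1" by (rule cInf_greatest) (use m in auto)
  ultimately show ?thesis unfolding thompson_def by simp
qed

lemma rel_of_thompson:
  assumes C: "closed_proper_cone C" and x: "x \<in> interior C" and y: "y \<in> interior C"
    and L: "thompson C x y \<le> L" and b: "\<beta> > exp L"
  shows "rel C \<beta> x y" "\<beta> > 1"
proof -
  let ?S = "{\<beta>::real. \<beta> \<ge> 1 \<and> cone_le C (inverse \<beta> *\<^sub>R x) y \<and> cone_le C y (\<beta> *\<^sub>R x)}"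
  have ne: "?S \<noteq> {}" using rel_exists[OF C x y] unfolding rel_def by auto
  have bdd: "bdd_below ?S" by (rule bdd_belowI[of _ 1]) auto
  have ge1: "Inf ?S \<ge> 1" by (rule cInf_greatest[OF ne]) auto
  have "exp (thompson C x y) = Inf ?S" unfolding thompson_def using ge1 by simp
  then have "Inf ?S \<le> exp L" using L by (metis exp_le_cancel_iff)
  then have lt: "Inf ?S < \<beta>" using b by simp
  then obtain \<beta>0 where b0: "\<beta>0 \<in> ?S" "\<beta>0 < \<beta>" using cInf_lessD[OF ne lt] by blast
  show "\<beta> > 1" using b0 by auto
  have xC: "x \<in> C" using x interior_subset by blast
  have "cone_le C (inverse \<beta> *\<^sub>R x) (inverse \<beta>0 *\<^sub>R x)"
    by (rule le_scalar_c[OF C xC]) (use b0 in \<open>auto intro: le_imp_inverse_le\<close>)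
  then have r1: "cone_le C (inverse \<beta> *\<^sub>R x) y" using b0 le_trans_c[OF C] by blast
  have "cone_le C (\<beta>0 *\<^sub>R x) (\<beta> *\<^sub>R x)" by (rule le_scalar_c[OF C xC]) (use b0 in auto)
  then have r2: "cone_le C y (\<beta> *\<^sub>R x)" using b0 le_trans_c[OF C] by blast
  show "rel C \<beta> x y" using r1 r2 unfolding rel_def by blast
qed

lemma int_add:
  fixes x :: "'a::real_normed_vector"
  assumes C: "closed_proper_cone C" and x: "x \<in> interior C" and y: "y \<in> C"
  shows "x + y \<in> interior C"
proof -
  obtain r where r: "r > 0" "ball x r \<subseteq> C" using x by (meson mem_interior)
  have "ball (x + y) r \<subseteq> C"
  proof
    fix z assume "z \<in> ball (x + y) r"
    then have "z - y \<in> ball x r" by (simp add: dist_norm algebra_simps)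
    then have "z - y \<in> C" using r by blast
    then have "(z - y) + y \<in> C" using cone_add[OF C _ y] by blast
    then show "z \<in> C" by simp
  qed
  then show ?thesis using r by (meson mem_interior)
qed

lemma near_rel:
  fixes x :: "'a::real_normed_vector"
  assumes C: "closed_proper_cone C" and r: "ball x r \<subseteq> C" and xC: "x \<in> C"
    and rho: "0 < \<rho>" "\<rho> < 1" and d: "norm (y - x) < r * \<rho>"
  shows "rel C (1 / (1 - \<rho>)) x y"
proof -
  define h where "h = y - x"
  have "norm ((1/\<rho>) *\<^sub>R h) < r" using d rho unfolding h_def
    by (simp add: divide_less_eq mult.commute)
  then have z1: "x + (1/\<rho>) *\<^sub>R h \<in> C" and z2: "x - (1/\<rho>) *\<^sub>R h \<in> C"
    using r by (auto simp: dist_norm subset_iff)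
  have "\<rho> *\<^sub>R (x + (1/\<rho>) *\<^sub>R h) \<in> C" using cone_scale[OF C z1] rho by auto
  moreover have "\<rho> *\<^sub>R (x + (1/\<rho>) *\<^sub>R h) = y - (1 - \<rho>) *\<^sub>R x"
    using rho unfolding h_def by (simp add: algebra_simps)
  ultimately have r1: "cone_le C (inverse (1 / (1 - \<rho>)) *\<^sub>R x) y" unfolding cone_le_def by simp
  have "\<rho> *\<^sub>R (x - (1/\<rho>) *\<^sub>R h) \<in> C" using cone_scale[OF C z2] rho by auto
  moreover have "\<rho> *\<^sub>R (x - (1/\<rho>) *\<^sub>R h) = (1 + \<rho>) *\<^sub>R x - y"
    using rho unfolding h_def by (simp add: algebra_simps)
  ultimately have "cone_le C y ((1 + \<rho>) *\<^sub>R x)" unfolding cone_le_def by simp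
  moreover have "cone_le C ((1 + \<rho>) *\<^sub>R x) ((1 / (1 - \<rho>)) *\<^sub>R x)"
  proof (rule le_scalar_c[OF C xC])
    have "(1 + \<rho>) * (1 - \<rho>) \<le> 1" by (simp add: algebra_simps)
    then show "1 + \<rho> \<le> 1 / (1 - \<rho>)" using rho by (simp add: le_divide_eq)
  qed
  ultimately have r2: "cone_le C y ((1 / (1 - \<rho>)) *\<^sub>R x)" using le_trans_c[OF C] by blast
  show ?thesis using r1 r2 unfolding rel_def by blast
qed

lemma rel_le_mult:
  assumes C: "closed_proper_cone C" and "rel C \<beta> x y" "\<beta> > 0"
  shows "cone_le C x (\<beta> *\<^sub>R y)"
proof -
  have "cone_le C (\<beta> *\<^sub>R (inverse \<beta> *\<^sub>R x)) (\<beta> *\<^sub>R y)"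
    using assms unfolding rel_def by (intro le_scale_c[OF C]) auto
  then show ?thesis using assms(3) by simp
qed

lemma one_side:
  assumes C: "closed_proper_cone C" and p: "p \<in> C" and q: "q \<in> C"
    and h1: "cone_le C p' (\<sigma> *\<^sub>R p)" and h2: "cone_le C q' (\<gamma> *\<^sub>R q)"
    and h3: "cone_le C (k *\<^sub>R (p + q)) p" and sg: "\<sigma> \<le> \<gamma>"
  shows "cone_le C (p' + q') ((\<gamma> - (\<gamma> - \<sigma>) * k) *\<^sub>R (p + q))"
proof -
  have a: "cone_le C (p' + q') (\<sigma> *\<^sub>R p + \<gamma> *\<^sub>R q)" using le_add_c[OF C h1 h2] .
  have "(\<gamma> - \<sigma>) *\<^sub>R (p - k *\<^sub>R (p + q)) \<in> C"
    using cone_scale[OF C _ , of "p - k *\<^sub>R (p + q)" "\<gamma> - \<sigma>"] h3 sg unfolding cone_le_def by auto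
  moreover have "(\<gamma> - \<sigma>) *\<^sub>R (p - k *\<^sub>R (p + q)) =
      ((\<gamma> - (\<gamma> - \<sigma>) * k) *\<^sub>R (p + q)) - (\<sigma> *\<^sub>R p + \<gamma> *\<^sub>R q)"
    by (simp add: algebra_simps)
  ultimately have "cone_le C (\<sigma> *\<^sub>R p + \<gamma> *\<^sub>R q) ((\<gamma> - (\<gamma> - \<sigma>) * k) *\<^sub>R (p + q))"
    unfolding cone_le_def by simp
  then show ?thesis using a le_trans_c[OF C] by blast
qed

lemma g_cont:
  fixes g :: "'a::real_normed_vector \<Rightarrow> 'a"
  assumes C: "closed_proper_cone C" and N: "normal_cone C" and G: "thompson_nonexpansive C g"
  shows "continuous_on (interior C) g"
  unfolding continuous_on_iff
proof (intro ballI allI impI)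
  fix x e assume x: "x \<in> interior C" and e: "(0::real) < e"
  obtain \<kappa> where kap: "\<And>x y. cone_le C 0 x \<and> cone_le C x y \<Longrightarrow> norm x \<le> \<kappa> * norm y"
    using N unfolding normal_cone_def by blast
  define K where "K = \<bar>\<kappa>\<bar>"
  have K0: "K \<ge> 0" unfolding K_def by simp
  obtain r where r: "r > 0" "ball x r \<subseteq> C" using x by (meson mem_interior)
  have xC: "x \<in> C" using x interior_subset by blast
  have gx: "g x \<in> interior C" using G x unfolding thompson_nonexpansive_def by blast
  define a where "a = norm (g x)"
  have a0: "a \<ge> 0" unfolding a_def by simp
  define \<theta> where "\<theta> = e / ((2 * K + 1) * (a + 1))"
  have th: "\<theta> > 0" unfolding \<theta>_def using e K0 a0 by (intro divide_pos_pos mult_pos_pos) auto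
  define \<rho> where "\<rho> = \<theta> / (2 * (1 + \<theta>))"
  have rho: "0 < \<rho>" "\<rho> < 1" unfolding \<rho>_def using th by (auto simp: divide_less_eq)
  have rb: "1 / (1 - \<rho>) < 1 + \<theta>"
  proof -
    have "(1 + \<theta>) * (1 - \<rho>) = 1 + \<theta> / 2" unfolding \<rho>_def using th by (simp add: field_simps)
    then have "1 < (1 + \<theta>) * (1 - \<rho>)" using th by simp
    then show ?thesis using rho by (simp add: divide_less_eq)
  qed
  show "\<exists>d>0. \<forall>x'\<in>interior C. dist x' x < d \<longrightarrow> dist (g x') (g x) < e"
  proof (intro exI[of _ "r * \<rho>"] conjI ballI impI)
    show "r * \<rho> > 0" using r rho by simp
    fix y assume y: "y \<in> interior C" and dy: "dist y x < r * \<rho>"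
    have gy: "g y \<in> interior C" using G y unfolding thompson_nonexpansive_def by blast
    have "rel C (1 / (1 - \<rho>)) x y" using near_rel[OF C r(2) xC rho] dy by (simp add: dist_norm)
    moreover have "1 / (1 - \<rho>) \<ge> 1" using rho by (simp add: le_divide_eq)
    ultimately have "thompson C x y \<le> ln (1 / (1 - \<rho>))" using thompson_le by blast
    then have "thompson C (g x) (g y) \<le> ln (1 / (1 - \<rho>))"
      using G x y unfolding thompson_nonexpansive_def by (meson order_trans)
    moreover have "exp (ln (1 / (1 - \<rho>))) < 1 + \<theta>" using rb rho by simp
    ultimately have R: "rel C (1 + \<theta>) (g x) (g y)" using rel_of_thompson[OF C gx gy] by blast
    define b where "b = 1 + \<theta>"
    have b1: "b > 1" unfolding b_def using th by simp
    have gxC: "g x \<in> C" using gx interior_subset by blast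
    have l1: "cone_le C 0 (g y - inverse b *\<^sub>R g x)" using R unfolding rel_def cone_le_def b_def by simp
    have l2: "cone_le C (g y - inverse b *\<^sub>R g x) ((b - inverse b) *\<^sub>R g x)"
      using R unfolding rel_def cone_le_def b_def by (simp add: algebra_simps)
    have n1: "norm (g y - inverse b *\<^sub>R g x) \<le> K * ((b - inverse b) * a)"
    proof -
      have "norm (g y - inverse b *\<^sub>R g x) \<le> \<kappa> * norm ((b - inverse b) *\<^sub>R g x)" using kap l1 l2 by blast
      also have "\<dots> \<le> K * norm ((b - inverse b) *\<^sub>R g x)" unfolding K_def
        by (intro mult_right_mono) auto
      also have "norm ((b - inverse b) *\<^sub>R g x) = (b - inverse b) * a"
      proof -
        have "inverse b < 1" using b1 by (simp add: inverse_less_1_iff)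
        then have "b - inverse b \<ge> 0" using b1 by linarith
        then show ?thesis unfolding a_def by simp
      qed
      finally show ?thesis .
    qed
    have ib: "b - inverse b \<le> 2 * \<theta>" "1 - inverse b \<le> \<theta>" "0 \<le> 1 - inverse b"
    proof -
      have "inverse b \<ge> 1 - \<theta>"
      proof -
        have "(1 - \<theta>) * b \<le> 1" unfolding b_def by (simp add: algebra_simps)
        then show ?thesis using b1 by (simp add: field_simps)
      qed
      then show "b - inverse b \<le> 2 * \<theta>" "1 - inverse b \<le> \<theta>" unfolding b_def by auto
      show "0 \<le> 1 - inverse b" using b1 by (simp add: inverse_le_1_iff)
    qed
    have "g y - g x = (g y - inverse b *\<^sub>R g x) - (1 - inverse b) *\<^sub>R g x" by (simp add: algebra_simps)
    then have "norm (g y - g x) \<le> norm (g y - inverse b *\<^sub>R g x) + norm ((1 - inverse b) *\<^sub>R g x)"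
      by (metis norm_triangle_ineq4)
    also have "\<dots> \<le> K * ((b - inverse b) * a) + (1 - inverse b) * a" using n1 ib(3) unfolding a_def by simp
    also have "\<dots> \<le> K * (2 * \<theta> * a) + \<theta> * a"
      using ib K0 a0 by (intro add_mono mult_left_mono mult_right_mono) auto
    also have "\<dots> = (2 * K + 1) * \<theta> * a" by (simp add: algebra_simps)
    also have "\<dots> = e * (a / (a + 1))" 
    proof -
      have p1: "2 * K + 1 \<noteq> 0" "a + 1 \<noteq> 0" using K0 a0 by auto
      have "(2 * K + 1) * \<theta> = e / (a + 1)" unfolding \<theta>_def using p1 by simp
      then show ?thesis by (simp add: mult.commute)
    qed
    also have "\<dots> < e" using e a0 by (simp add: divide_less_eq)
    finally show "dist (g y) (g x) < e" by (simp add: dist_norm)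
  qed
qed

lemma tau_le:
  assumes "d > 0" "finite F" "A \<subseteq> \<Union>F"
    "\<forall>S\<in>F. S \<subseteq> interior C \<and> (\<forall>x\<in>S. \<forall>y\<in>S. thompson C x y \<le> d)"
  shows "tau C A \<le> ereal d"
  unfolding tau_def by (rule Inf_lower) (use assms in blast)

lemma tau_ge0: "0 \<le> tau C A"
  unfolding tau_def by (rule Inf_greatest) auto

lemma tau_lessE:
  assumes "tau C A < ereal x"
  obtains d F where "d > 0" "d < x" "finite F" "A \<subseteq> \<Union>F"
    "\<forall>S\<in>F. S \<subseteq> interior C \<and> (\<forall>x\<in>S. \<forall>y\<in>S. thompson C x y \<le> d)"
proof -
  from assms obtain z where "z \<in> {ereal d | d. d > 0 \<and> (\<exists>F. finite F \<and> A \<subseteq> \<Union>F \<and>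
      (\<forall>S\<in>F. S \<subseteq> interior C \<and> (\<forall>x\<in>S. \<forall>y\<in>S. thompson C x y \<le> d)))}" "z < ereal x"
    unfolding tau_def by (auto simp: Inf_less_iff)
  then show ?thesis using that by auto
qed

lemma finite_min_const:
  assumes "finite FF" "\<forall>T\<in>FF. \<exists>c>0. P c T"
    "\<And>c c' T. P c T \<Longrightarrow> 0 < c' \<Longrightarrow> c' \<le> c \<Longrightarrow> P c' T"
  shows "\<exists>c>(0::real). \<forall>T\<in>FF. P c T"
  using assms(1,2)
proof (induction FF rule: finite_induct)
  case empty then show ?case by (intro exI[of _ 1]) auto
next
  case (insert T FF)
  obtain c1 where c1: "c1 > 0" "\<forall>T\<in>FF. P c1 T" using insert by auto
  obtain c2 where c2: "c2 > 0" "P c2 T" using insert by auto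
  show ?case
    by (rule exI[of _ "min c1 c2"]) (use c1 c2 assms(3) in auto)
qed

theorem theorem2p5:
  fixes C :: "'a::banach set" and f g :: "'a \<Rightarrow> 'a"
  assumes "closed_proper_cone C"
    and "normal_cone C"
    and "interior C \<noteq> {}"
    and "tau_condensing C (interior C) f"
    and "thompson_nonexpansive C g"
  shows "tau_condensing C (interior C) (\<lambda>x. f x + g x)"
proof -
  have C: "closed_proper_cone C" using assms(1) .
  have fc: "continuous_on (interior C) f" and fi: "f ` interior C \<subseteq> interior C"
    and fcond: "\<And>A. A \<subseteq> interior C \<Longrightarrow> thompson_bounded C A \<Longrightarrow> tau C A > 0 \<Longrightarrow> tau C (f ` A) < tau C A"
    using assms(4) unfolding tau_condensing_def by auto
  have gi: "g ` interior C \<subseteq> interior C"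
    and gne: "\<And>x y. x \<in> interior C \<Longrightarrow> y \<in> interior C \<Longrightarrow> thompson C (g x) (g y) \<le> thompson C x y"
    using assms(5) unfolding thompson_nonexpansive_def by auto
  have gc: "continuous_on (interior C) g" using g_cont[OF C assms(2) assms(5)] .
  have sumint: "f x + g x \<in> interior C" if "x \<in> interior C" for x
    using int_add[OF C, of "f x" "g x"] fi gi that interior_subset by blast
  have cond: "tau C ((\<lambda>x. f x + g x) ` A) < tau C A"
    if A: "A \<subseteq> interior C" "thompson_bounded C A" "tau C A > 0" for A
  proof -
    obtain M where M: "\<forall>x\<in>A. \<forall>y\<in>A. thompson C x y \<le> M"
      using A(2) unfolding thompson_bounded_def by blast
    have Ane: "A \<noteq> {}"
    proof
      assume "A = {}"
      obtain z where z: "0 < ereal z" "ereal z < tau C A" using ereal_dense2[OF A(3)] by blast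
      have "tau C A \<le> ereal z" using z \<open>A = {}\<close> by (intro tau_le[of z "{}"]) auto
      then show False using z by simp
    qed
    have "tau C A \<le> ereal (max M 1)"
      by (rule tau_le[of _ "{A}"]) (use A(1) M in \<open>auto simp: le_max_iff_disj\<close>)
    then obtain t where t: "tau C A = ereal t" using A(3)
      by (cases "tau C A") (auto simp: max_def split: if_splits)
    have t0: "t > 0" using A(3) t by simp
    have ft: "tau C (f ` A) < ereal t" using fcond[OF A] t by simp
    obtain s' where s': "tau C (f ` A) < ereal s'" "s' < t" using ereal_dense2[OF ft] by auto
    have "0 < ereal s'" using order_le_less_trans[OF tau_ge0 s'(1)] .
    then have s0: "s' > 0" by simp
    obtain df FF where FF: "df > 0" "df < s'" "finite FF" "f ` A \<subseteq> \<Union>FF"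
      "\<forall>S\<in>FF. S \<subseteq> interior C \<and> (\<forall>x\<in>S. \<forall>y\<in>S. thompson C x y \<le> df)"
      using tau_lessE[OF s'(1)] by metis
    obtain u where u: "u \<in> A" using Ane by blast
    have uC: "u \<in> interior C" using u A(1) by blast
    have guI: "g u \<in> interior C" using gi uC by blast
    have guC: "g u \<in> C" using guI interior_subset by blast
    have "\<exists>c>(0::real). \<forall>T\<in>FF. \<forall>x\<in>T. cone_le C (c *\<^sub>R g u) x"
    proof (rule finite_min_const[OF FF(3)])
      show "\<forall>T\<in>FF. \<exists>c>0. \<forall>x\<in>T. cone_le C (c *\<^sub>R g u) x"
      proof
        fix T assume T: "T \<in> FF"
        show "\<exists>c>0. \<forall>x\<in>T. cone_le C (c *\<^sub>R g u) x"
        proof (cases "T = {}")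
          case True then show ?thesis by (intro exI[of _ 1]) auto
        next
          case False
          then obtain p where p: "p \<in> T" by blast
          have pI: "p \<in> interior C" using p T FF(5) by blast
          obtain cp where cp: "cp > 0" "p - cp *\<^sub>R g u \<in> C" using int_dom[OF pI] by blast
          define \<beta> where "\<beta> = exp df + 1"
          have b: "\<beta> > exp df" "\<beta> > 0" unfolding \<beta>_def by (auto intro: add_pos_pos)
          show ?thesis
          proof (intro exI[of _ "inverse \<beta> * cp"] conjI ballI)
            show "inverse \<beta> * cp > 0" using b cp by simp
            fix x assume x: "x \<in> T"
            have xI: "x \<in> interior C" using x T FF(5) by blast
            have "rel C \<beta> x p" using rel_of_thompson(1)[OF C xI pI _ b(1)] x p T FF(5) by blast
            then have l1: "cone_le C p (\<beta> *\<^sub>R x)" unfolding rel_def by blast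
            have cpp: "cone_le C (cp *\<^sub>R g u) p" using cp unfolding cone_le_def by simp
            have "cone_le C (inverse \<beta> *\<^sub>R (cp *\<^sub>R g u)) (inverse \<beta> *\<^sub>R p)"
              using le_scale_c[OF C cpp, of "inverse \<beta>"] b(2) by simp
            moreover have "cone_le C (inverse \<beta> *\<^sub>R p) x"
              using le_scale_c[OF C l1, of "inverse \<beta>"] b by simp
            ultimately show "cone_le C ((inverse \<beta> * cp) *\<^sub>R g u) x"
              using le_trans_c[OF C] by simp
          qed
        qed
      qed
    next
      fix c c' T assume h: "\<forall>x\<in>T. cone_le C (c *\<^sub>R g u) x" "0 < c'" "c' \<le> c"
      show "\<forall>x\<in>T. cone_le C (c' *\<^sub>R g u) x"
        using h le_trans_c[OF C le_scalar_c[OF C guC h(3)]] by blast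
    qed
    then obtain c0 where c0: "c0 > 0" "\<forall>T\<in>FF. \<forall>x\<in>T. cone_le C (c0 *\<^sub>R g u) x" by blast
    define c where "c = c0 * inverse (exp M + 1)"
    have c: "c > 0" unfolding c_def using c0 by (simp add: add_pos_pos)
    have fgc: "cone_le C (c *\<^sub>R g b) (f a)" if a: "a \<in> A" and b: "b \<in> A" for a b
    proof -
      have aI: "a \<in> interior C" and bI: "b \<in> interior C" using a b A(1) by auto
      have "f a \<in> \<Union>FF" using a FF(4) by blast
      then have l1: "cone_le C (c0 *\<^sub>R g u) (f a)" using c0 by blast
      have gbI: "g b \<in> interior C" using gi bI by blast
      have "thompson C (g b) (g u) \<le> M" using gne[OF bI uC] M b u by force
      then have "rel C (exp M + 1) (g b) (g u)" using rel_of_thompson(1)[OF C gbI guI] by simp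
      then have gg: "cone_le C (inverse (exp M + 1) *\<^sub>R g b) (g u)" unfolding rel_def by blast
      have "cone_le C (c0 *\<^sub>R (inverse (exp M + 1) *\<^sub>R g b)) (c0 *\<^sub>R g u)"
        using le_scale_c[OF C gg, of c0] c0 by simp
      then show ?thesis using l1 le_trans_c[OF C] unfolding c_def by simp
    qed
    define k where "k = c / (1 + c)"
    have k: "0 < k" "k < 1" unfolding k_def using c by auto
    have kfg: "cone_le C (k *\<^sub>R (f a + g a)) (f a)" if a: "a \<in> A" for a
    proof -
      have "(1 / (1 + c)) *\<^sub>R (f a - c *\<^sub>R g a) \<in> C"
        using cone_scale[OF C _, of "f a - c *\<^sub>R g a" "1/(1+c)"] fgc[OF a a] c
        unfolding cone_le_def by simp
      moreover have "(1 / (1 + c)) *\<^sub>R (f a - c *\<^sub>R g a) = f a - k *\<^sub>R (f a + g a)"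
      proof -
        have e1: "1 - k = 1 / (1 + c)" and e2: "k = 1 / (1 + c) * c" unfolding k_def using c
          by (auto simp: field_simps)
        have "f a - k *\<^sub>R (f a + g a) = (1 - k) *\<^sub>R f a - k *\<^sub>R g a" by (simp add: algebra_simps)
        also have "\<dots> = (1 / (1 + c)) *\<^sub>R (f a - c *\<^sub>R g a)"
          unfolding e1 by (subst e2) (simp add: algebra_simps)
        finally show ?thesis by simp
      qed
      ultimately show ?thesis unfolding cone_le_def by simp
    qed
    define E where "E = exp t"
    define S where "S = exp s'"
    have SE: "S < E" "1 < S" unfolding S_def E_def using s' s0 by auto
    define \<epsilon> where "\<epsilon> = (E - S) * k / 2"
    have eps: "\<epsilon> > 0" unfolding \<epsilon>_def using SE k by simp
    define \<gamma> where "\<gamma> = E + \<epsilon>"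
    define \<delta> where "\<delta> = \<gamma> - (\<gamma> - S) * k"
    have gam: "\<gamma> > E" "\<gamma> > S" "\<gamma> > 0" unfolding \<gamma>_def using eps SE by auto
    have del: "\<delta> < E" "\<delta> \<ge> 1"
    proof -
      have "\<delta> = E - (E - S) * k + \<epsilon> * (1 - k)" unfolding \<delta>_def \<gamma>_def by (simp add: algebra_simps)
      also have "\<epsilon> * (1 - k) \<le> \<epsilon>" using eps k by (simp add: mult_le_cancel_left1)
      finally have "\<delta> \<le> E - (E - S) * k + \<epsilon>" by simp
      moreover have "(E - S) * k > 0" using SE k by simp
      ultimately show "\<delta> < E" unfolding \<epsilon>_def by linarith
      have "\<delta> = \<gamma> * (1 - k) + S * k" unfolding \<delta>_def by (simp add: algebra_simps)
      also have "\<dots> \<ge> S * (1 - k) + S * k" using gam k by (intro add_mono mult_right_mono) auto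
      finally show "\<delta> \<ge> 1" using SE by (simp add: algebra_simps)
    qed
    have "exp t < exp (ln \<gamma>)" using gam unfolding E_def by simp
    then have "t < ln \<gamma>" by simp
    then have "tau C A < ereal (ln \<gamma>)" using t by simp
    then obtain dA FA where FA: "dA > 0" "dA < ln \<gamma>" "finite FA" "A \<subseteq> \<Union>FA"
      "\<forall>S\<in>FA. S \<subseteq> interior C \<and> (\<forall>x\<in>S. \<forall>y\<in>S. thompson C x y \<le> dA)"
      by (rule tau_lessE)
    define G where "G = (\<lambda>(P, T). (\<lambda>a. f a + g a) ` {a \<in> A. a \<in> P \<and> f a \<in> T}) ` (FA \<times> FF)"
    define d where "d = max (ln \<delta>) (t / 2)"
    have "ln \<delta> < ln E" using del by (intro ln_less_cancel_iff[THEN iffD2]) auto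
    then have "ln \<delta> < t" unfolding E_def by simp
    then have d: "d > 0" "d < t" unfolding d_def using t0 by auto
    have "tau C ((\<lambda>x. f x + g x) ` A) \<le> ereal d"
    proof (rule tau_le[OF d(1)])
      show "finite G" unfolding G_def using FA(3) FF(3) by simp
      show "(\<lambda>x. f x + g x) ` A \<subseteq> \<Union>G"
      proof
        fix y assume "y \<in> (\<lambda>x. f x + g x) ` A"
        then obtain a where a: "a \<in> A" "y = f a + g a" by blast
        obtain P where P: "P \<in> FA" "a \<in> P" using a FA(4) by blast
        obtain T where T: "T \<in> FF" "f a \<in> T" using a FF(4) by blast
        have "y \<in> (\<lambda>a. f a + g a) ` {a' \<in> A. a' \<in> P \<and> f a' \<in> T}" using a P T by blast
        then show "y \<in> \<Union>G" unfolding G_def using P T by blast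
      qed
      show "\<forall>Q\<in>G. Q \<subseteq> interior C \<and> (\<forall>x\<in>Q. \<forall>y\<in>Q. thompson C x y \<le> d)"
      proof
        fix Q assume "Q \<in> G"
        then obtain P T where PT: "P \<in> FA" "T \<in> FF"
          and Q: "Q = (\<lambda>a. f a + g a) ` {a \<in> A. a \<in> P \<and> f a \<in> T}" unfolding G_def by blast
        have "Q \<subseteq> interior C" unfolding Q using sumint A(1) by blast
        moreover have "thompson C x y \<le> d" if x: "x \<in> Q" and y: "y \<in> Q" for x y
        proof -
          obtain a where a: "a \<in> A" "a \<in> P" "f a \<in> T" "x = f a + g a" using x Q by blast
          obtain b where b: "b \<in> A" "b \<in> P" "f b \<in> T" "y = f b + g b" using y Q by blast
          have aI: "a \<in> interior C" and bI: "b \<in> interior C" using a b A(1) by auto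
          have faI: "f a \<in> interior C" and fbI: "f b \<in> interior C" using aI bI fi by auto
          have gaI: "g a \<in> interior C" and gbI: "g b \<in> interior C" using aI bI gi by auto
          have faC: "f a \<in> C" and fbC: "f b \<in> C" and gaC: "g a \<in> C" and gbC: "g b \<in> C"
            using faI fbI gaI gbI interior_subset by auto
          have "thompson C (f a) (f b) \<le> df" using a b PT FF(5) by blast
          moreover have "S > exp df" unfolding S_def using FF(2) by simp
          ultimately have Rf: "rel C S (f a) (f b)" using rel_of_thompson(1)[OF C faI fbI] by blast
          have "thompson C (g a) (g b) \<le> dA"
            using gne[OF aI bI] a b PT FA(5) by (meson order_trans)
          moreover have "\<gamma> > exp dA" using FA(2) gam(3) by (metis exp_less_mono exp_ln)
          ultimately have Rg: "rel C \<gamma> (g a) (g b)" using rel_of_thompson(1)[OF C gaI gbI] by blast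
          have sg: "S \<le> \<gamma>" using gam by simp
          have side1: "cone_le C (f b + g b) (\<delta> *\<^sub>R (f a + g a))"
            unfolding \<delta>_def
            by (rule one_side[OF C faC gaC _ _ kfg[OF a(1)] sg]) (use Rf Rg in \<open>auto simp: rel_def\<close>)
          have side2: "cone_le C (f a + g a) (\<delta> *\<^sub>R (f b + g b))"
            unfolding \<delta>_def
          proof (rule one_side[OF C fbC gbC _ _ kfg[OF b(1)] sg])
            show "cone_le C (f a) (S *\<^sub>R f b)" using rel_le_mult[OF C Rf] SE by simp
            show "cone_le C (g a) (\<gamma> *\<^sub>R g b)" using rel_le_mult[OF C Rg] gam by simp
          qed
          have "cone_le C (inverse \<delta> *\<^sub>R (f a + g a)) (inverse \<delta> *\<^sub>R (\<delta> *\<^sub>R (f b + g b)))"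
            using le_scale_c[OF C side2, of "inverse \<delta>"] del by simp
          then have "rel C \<delta> (f a + g a) (f b + g b)"
            using side1 del unfolding rel_def by simp
          then have "thompson C x y \<le> ln \<delta>" using thompson_le del a b by blast
          then show ?thesis unfolding d_def by simp
        qed
        ultimately show "Q \<subseteq> interior C \<and> (\<forall>x\<in>Q. \<forall>y\<in>Q. thompson C x y \<le> d)" by blast
      qed
    qed
    also have "ereal d < tau C A" using t d by simp
    finally show ?thesis .
  qed
  show ?thesis unfolding tau_condensing_def
  proof (intro conjI allI impI)
    show "continuous_on (interior C) (\<lambda>x. f x + g x)" using fc gc by (rule continuous_on_add)
    show "(\<lambda>x. f x + g x) ` interior C \<subseteq> interior C" using sumint by blast
    fix A assume "A \<subseteq> interior C \<and> thompson_bounded C A \<and> 0 < tau C A"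
    then show "tau C ((\<lambda>x. f x + g x) ` A) < tau C A" using cond by blast
  qed
qed

end
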